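(* Let $\{T^k\}_k$ and $(\mathbf{P}_t)_t$ satisfy the standing assumptions (i) and (ii), and let $\pi$ be a probability distribution on $\mathcal{S}$. Then there exists a sequence of root estimators that is consistent for $\{T^k\}_k$, $(\mathbf{P}_t)_t$ and $\pi$ if and only if for all $i\ne j\in\mathcal{S}$ with $\pi(i)\wedge\pi(j)>0$, $$\liminf_{k\to\infty}\|\mathcal{L}^i_{T^k}-\mathcal{L}^j_{T^k}\|_{\mathrm{TV}}=1.$$
   Context: Trees: finite rooted trees $T=(V,E,\rho,\ell)$ with positive edge lengths, viewed as metric objects; leaves $\partial T$. Markov process on countable $\mathcal{S}$ with transition matrices $\mathbf{P}_t=(p_{ij}(t))$ and stable conservative $Q$-matrix. A $\mathbf{P}_t$-chain on $T$: root state $X_\rho$, then along each edge $(u,v)$ run the chain from $X_u$ for time $\ell_{(u,v)}$, independently on outgoing edges given the branching state. $\mathbb{P}^i$, $\mathbb{P}^\pi$: laws with root state $i$, resp. drawn from $\pi$. $\mathcal{L}^i_T$ denotes the law of the leaf states $(X_u)_{u\in\partial T}$ under $\mathbb{P}^i$. Standing assumptions: $\{T^k\}$ nested with common root ($T^{k-1}$ is the restriction of $T^k$ to a subset of its leaves), $|\partial T^k|=k$; (i) uniformly bounded height; (ii) for every $t$ the rows of $\mathbf{P}_t$ are distinct. $X^k$ is a $\mathbf{P}_t$-chain on $T^k$ with root distribution $\pi$; root estimators $F_k:\mathcal{S}^{\partial T^k}\to\mathcal{S}$ are consistent if $\liminf_k\mathbb{P}^\pi[F_k(X^k_{\partial T^k})=X^k_\rho]=1$.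 TV distance $\|\mu_1-\mu_2\|_{\mathrm{TV}}=\frac12\sum_\sigma|\mu_1(\sigma)-\mu_2(\sigma)|$. *)

theory Defs
  imports "HOL-Probability.Probability"
begin

text \<open>A rooted tree on vertex type 'v: finite vertex set, a root, a parent map
  (meaningful on non-root vertices) and the length of the edge (par v, v)
  attached to each non-root vertex v.\<close>

record 'v mtree =
  verts :: "'v set"
  root  :: 'v
  par   :: "'v \<Rightarrow> 'v"
  len   :: "'v \<Rightarrow> real"

definition is_mtree :: "'v mtree \<Rightarrow> bool" where
  "is_mtree T \<longleftrightarrow> finite (verts T) \<and> root T \<in> verts T
     \<and> (\<forall>v \<in> verts T - {root T}. par T v \<in> verts T \<and> len T v > 0)
     \<and> (\<forall>v \<in> verts T. \<exists>n. (par T ^^ n) v = root T)"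

definition depth :: "'v mtree \<Rightarrow> 'v \<Rightarrow> nat" where
  "depth T v = (LEAST n. (par T ^^ n) v = root T)"

definition children :: "'v mtree \<Rightarrow> 'v \<Rightarrow> 'v set" where
  "children T v = {c \<in> verts T - {root T}. par T c = v}"

definition leaves :: "'v mtree \<Rightarrow> 'v set" where
  "leaves T = {v \<in> verts T - {root T}. children T v = {}}"

definition root_dist :: "'v mtree \<Rightarrow> 'v \<Rightarrow> real" where
  "root_dist T v = (\<Sum>m < depth T v. len T ((par T ^^ m) v))"

definition height :: "'v mtree \<Rightarrow> real" where
  "height T = Max (root_dist T ` verts T)"

definition ancestor :: "'v mtree \<Rightarrow> 'v \<Rightarrow> 'v \<Rightarrow> bool" where
  "ancestor T u v \<longleftrightarrow> (\<exists>n \<le> depth T v. (par T ^^ n) v = u)"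

definition restriction_of :: "'v mtree \<Rightarrow> 'v mtree \<Rightarrow> 'v set \<Rightarrow> bool" where
  "restriction_of T' T L \<longleftrightarrow> L \<subseteq> leaves T
     \<and> verts T' = {u \<in> verts T. \<exists>l \<in> L. ancestor T u l}
     \<and> root T' = root T
     \<and> (\<forall>v \<in> verts T' - {root T'}. par T' v = par T v \<and> len T' v = len T v)"

text \<open>P t i is the row (p_ij(t))_j of the transition matrix, as a pmf.
  Transition function with a stable conservative Q-matrix q.\<close>
definition transition_fun :: "(real \<Rightarrow> 'a::countable \<Rightarrow> 'a pmf) \<Rightarrow> bool" where
  "transition_fun P \<longleftrightarrow>
     (\<forall>i. P 0 i = return_pmf i)
   \<and> (\<forall>s t i. s \<ge> 0 \<longrightarrow> t \<ge> 0 \<longrightarrow> P (s + t) i = bind_pmf (P s i) (\<lambda>j. P t j))"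

definition stable_conservative_Q :: "(real \<Rightarrow> 'a::countable \<Rightarrow> 'a pmf) \<Rightarrow> ('a \<Rightarrow> 'a \<Rightarrow> real) \<Rightarrow> bool" where
  "stable_conservative_Q P q \<longleftrightarrow>
     (\<forall>i j. ((\<lambda>t. pmf (P t i) j) has_real_derivative q i j) (at 0 within {0..}))
   \<and> (\<forall>i. (q i has_sum 0) UNIV)"

text \<open>Level-by-level construction: all vertices at depth n+1 are sampled
  independently, each from P (len v) applied to the state of its parent.\<close>
primrec chain_upto :: "'v mtree \<Rightarrow> (real \<Rightarrow> 'a \<Rightarrow> 'a pmf) \<Rightarrow> 'a \<Rightarrow> nat \<Rightarrow> ('v \<Rightarrow> 'a) pmf" where
  "chain_upto T P i 0 = return_pmf (\<lambda>v. i)"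
| "chain_upto T P i (Suc n) =
     bind_pmf (chain_upto T P i n) (\<lambda>x.
       map_pmf (\<lambda>y v. if v \<in> verts T - {root T} \<and> depth T v = Suc n then y v else x v)
         (Pi_pmf {v \<in> verts T - {root T}. depth T v = Suc n} undefined
            (\<lambda>v. P (len T v) (x (par T v)))))"

definition chain_law :: "'v mtree \<Rightarrow> (real \<Rightarrow> 'a \<Rightarrow> 'a pmf) \<Rightarrow> 'a \<Rightarrow> ('v \<Rightarrow> 'a) pmf" where
  "chain_law T P i = chain_upto T P i (Max (depth T ` verts T))"

text \<open>L^i_T: law of the leaf states (functions on leaves, undefined elsewhere).\<close>
definition leaf_law :: "'v mtree \<Rightarrow> (real \<Rightarrow> 'a \<Rightarrow> 'a pmf) \<Rightarrow> 'a \<Rightarrow> ('v \<Rightarrow> 'a) pmf" where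
  "leaf_law T P i = map_pmf (\<lambda>x. restrict x (leaves T)) (chain_law T P i)"

definition root_leaf_law :: "'v mtree \<Rightarrow> (real \<Rightarrow> 'a \<Rightarrow> 'a pmf) \<Rightarrow> 'a pmf \<Rightarrow> ('a \<times> ('v \<Rightarrow> 'a)) pmf" where
  "root_leaf_law T P \<pi> = bind_pmf \<pi> (\<lambda>i. map_pmf (\<lambda>\<sigma>. (i, \<sigma>)) (leaf_law T P i))"

definition tv_dist :: "'b pmf \<Rightarrow> 'b pmf \<Rightarrow> real" where
  "tv_dist \<mu> \<nu> = (\<Sum>\<^sub>\<infinity>\<sigma>. \<bar>pmf \<mu> \<sigma> - pmf \<nu> \<sigma>\<bar>) / 2"

definition consistent_estimators ::
  "(nat \<Rightarrow> 'v mtree) \<Rightarrow> (real \<Rightarrow> 'a \<Rightarrow> 'a pmf) \<Rightarrow> 'a pmf \<Rightarrow> (nat \<Rightarrow> ('v \<Rightarrow> 'a) \<Rightarrow> 'a) \<Rightarrow> bool" where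
  "consistent_estimators T P \<pi> F \<longleftrightarrow>
     liminf (\<lambda>k. ereal (measure_pmf.prob (root_leaf_law (T k) P \<pi>) {(i, \<sigma>). F k \<sigma> = i})) = 1"

end

theory Submission
  imports Defs
begin
no_notation Infinite_Sum.abs_summable_on (infixr \<open>abs'_summable'_on\<close> 46)

definition ov :: "'b pmf \<Rightarrow> 'b pmf \<Rightarrow> real" where
  "ov \<mu> \<nu> = infsetsum (\<lambda>\<sigma>. min (pmf \<mu> \<sigma>) (pmf \<nu> \<sigma>)) UNIV"

lemma absd_summable: "(\<lambda>\<sigma>. \<bar>pmf \<mu> \<sigma> - pmf \<nu> \<sigma>\<bar>) abs_summable_on A"
proof -
  have "(\<lambda>\<sigma>. pmf \<mu> \<sigma> + pmf \<nu> \<sigma>) abs_summable_on A" by auto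
  then show ?thesis
  proof (rule abs_summable_on_comparison_test')
    fix x show "norm \<bar>pmf \<mu> x - pmf \<nu> x\<bar> \<le> pmf \<mu> x + pmf \<nu> x"
      using pmf_nonneg[of \<mu> x] pmf_nonneg[of \<nu> x] by (simp add: abs_le_iff)
  qed
qed

lemma min_summable: "(\<lambda>\<sigma>. min (pmf \<mu> \<sigma>) (pmf \<nu> \<sigma>)) abs_summable_on A"
  by (rule abs_summable_on_comparison_test'[OF pmf_abs_summable[of \<mu> A]]) (auto simp: pmf_nonneg)

lemma tv_ov: "tv_dist \<mu> \<nu> = 1 - ov \<mu> \<nu>"
proof -
  have "tv_dist \<mu> \<nu> = infsetsum (\<lambda>\<sigma>. \<bar>pmf \<mu> \<sigma> - pmf \<nu> \<sigma>\<bar>) UNIV / 2"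
    unfolding tv_dist_def by (subst infsetsum_infsum[OF absd_summable]) simp
  moreover have "ov \<mu> \<nu> = infsetsum (\<lambda>\<sigma>. (pmf \<mu> \<sigma> + pmf \<nu> \<sigma>) - \<bar>pmf \<mu> \<sigma> - pmf \<nu> \<sigma>\<bar>) UNIV / 2"
  proof -
    have "ov \<mu> \<nu> = infsetsum (\<lambda>\<sigma>. ((pmf \<mu> \<sigma> + pmf \<nu> \<sigma>) - \<bar>pmf \<mu> \<sigma> - pmf \<nu> \<sigma>\<bar>) / 2) UNIV"
      unfolding ov_def by (rule infsetsum_cong) auto
    then show ?thesis by (simp add: infsetsum_cdiv abs_summable_on_diff abs_summable_on_add absd_summable pmf_abs_summable)
  qed
  moreover have "infsetsum (\<lambda>\<sigma>. (pmf \<mu> \<sigma> + pmf \<nu> \<sigma>) - \<bar>pmf \<mu> \<sigma> - pmf \<nu> \<sigma>\<bar>) UNIV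
      = 2 - infsetsum (\<lambda>\<sigma>. \<bar>pmf \<mu> \<sigma> - pmf \<nu> \<sigma>\<bar>) UNIV"
    by (subst infsetsum_diff) (auto simp: absd_summable infsetsum_add[OF pmf_abs_summable pmf_abs_summable] infsetsum_pmf_eq_1[of _ UNIV] abs_summable_on_add pmf_abs_summable)
  ultimately show ?thesis by simp
qed

lemma ov_nonneg: "ov \<mu> \<nu> \<ge> 0"
  unfolding ov_def by (rule infsetsum_nonneg) (auto simp: pmf_nonneg)

lemma ov_le: "ov \<mu> \<nu> \<le> measure_pmf.prob \<mu> (- A) + measure_pmf.prob \<nu> A"
proof -
  let ?m = "\<lambda>\<sigma>. min (pmf \<mu> \<sigma>) (pmf \<nu> \<sigma>)"
  have "ov \<mu> \<nu> = infsetsum ?m (- A) + infsetsum ?m A"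
    unfolding ov_def by (subst infsetsum_Un_disjoint[symmetric]) (auto simp: min_summable)
  also have "\<dots> \<le> infsetsum (pmf \<mu>) (- A) + infsetsum (pmf \<nu>) A"
    by (intro add_mono infsetsum_mono) (auto simp: min_summable)
  finally show ?thesis by (simp add: measure_pmf_conv_infsetsum)
qed

lemma ov_le_weighted:
  assumes "a \<ge> 0" "b \<le> 1" "a \<le> 1" "\<And>\<sigma>. \<sigma> \<in> B \<Longrightarrow> a * pmf \<mu> \<sigma> \<le> b * pmf \<nu> \<sigma>"
  shows "a * measure_pmf.prob \<mu> B \<le> ov \<mu> \<nu>"
proof -
  note True = assms(3)
  have "a * measure_pmf.prob \<mu> B = infsetsum (\<lambda>\<sigma>. a * pmf \<mu> \<sigma>) B"
    by (simp add: measure_pmf_conv_infsetsum infsetsum_cmult_right pmf_abs_summable)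
  also have "\<dots> \<le> infsetsum (\<lambda>\<sigma>. min (pmf \<mu> \<sigma>) (pmf \<nu> \<sigma>)) B"
  proof (rule infsetsum_mono)
    fix \<sigma> assume s: "\<sigma> \<in> B"
    have "a * pmf \<mu> \<sigma> \<le> pmf \<mu> \<sigma>" using True assms(1) by (simp add: mult_left_le_one_le pmf_nonneg)
    moreover have "a * pmf \<mu> \<sigma> \<le> pmf \<nu> \<sigma>"
    proof (cases "b \<ge> 0")
      case True then show ?thesis using assms(4)[OF s] assms(2)
        by (meson dual_order.trans mult_left_le_one_le pmf_nonneg)
    next
      case False then show ?thesis using assms(4)[OF s]
        by (smt (verit) mult_nonpos_nonneg pmf_nonneg)
    qed
    ultimately show "a * pmf \<mu> \<sigma> \<le> min (pmf \<mu> \<sigma>) (pmf \<nu> \<sigma>)" by simp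
  qed (auto simp: min_summable)
  also have "\<dots> \<le> ov \<mu> \<nu>"
    unfolding ov_def by (rule infsetsum_mono_neutral_left) (auto simp: min_summable pmf_nonneg)
  finally show ?thesis .
qed


lemma integrable_pmf_bounded:
  fixes g :: "'a \<Rightarrow> real"
  assumes "\<And>x. \<bar>g x\<bar> \<le> B"
  shows "integrable (measure_pmf M) g"
  by (rule measure_pmf.integrable_const_bound[where B=B]) (auto simp: assms)

lemma prob_bind_pmf:
  "measure_pmf.prob (bind_pmf M N) X = (\<integral>x. measure_pmf.prob (N x) X \<partial>M)"
proof -
  have "emeasure (measure_pmf (bind_pmf M N)) X = (\<integral>\<^sup>+x. emeasure (N x) X \<partial>M)"
    by (rule emeasure_bind_pmf)
  also have "\<dots> = (\<integral>\<^sup>+x. ennreal (measure_pmf.prob (N x) X) \<partial>M)"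
    by (simp add: measure_pmf.emeasure_eq_measure)
  also have "\<dots> = ennreal (\<integral>x. measure_pmf.prob (N x) X \<partial>M)"
    by (rule nn_integral_eq_integral) (auto intro!: integrable_pmf_bounded[where B=1])
  finally show ?thesis
    by (simp add: measure_pmf.emeasure_eq_measure integral_nonneg_AE)
qed

lemma success_formula:
  "measure_pmf.prob (root_leaf_law T P \<pi>) {(i, \<sigma>). f \<sigma> = i}
    = (\<integral>x. measure_pmf.prob (leaf_law T P x) {\<sigma>. f \<sigma> = x} \<partial>\<pi>)"
  unfolding root_leaf_law_def prob_bind_pmf
  by (rule Bochner_Integration.integral_cong[OF refl]) (simp add: vimage_def)

lemma forward_bound:
  fixes \<mu> :: "'a \<Rightarrow> 'b pmf" and f :: "'b \<Rightarrow> 'a"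
  assumes "i \<noteq> j"
  shows "min (pmf \<pi> i) (pmf \<pi> j) * (1 - tv_dist (\<mu> i) (\<mu> j))
     \<le> 1 - (\<integral>x. measure_pmf.prob (\<mu> x) {\<sigma>. f \<sigma> = x} \<partial>\<pi>)"
proof -
  define g where "g x = measure_pmf.prob (\<mu> x) {\<sigma>. f \<sigma> = x}" for x
  define h where "h x = (if x \<in> {i, j} then 1 - g x else 0)" for x
  have g01: "0 \<le> g x" "g x \<le> 1" for x unfolding g_def by auto
  have "(\<integral>x. g x \<partial>\<pi>) \<le> (\<integral>x. 1 - h x \<partial>\<pi>)"
    by (intro integral_mono integrable_pmf_bounded[where B=1])
       (auto simp: h_def g01 abs_le_iff)
  also have "\<dots> = 1 - (\<integral>x. h x \<partial>\<pi>)"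
    by (subst Bochner_Integration.integral_diff)
       (auto intro!: integrable_pmf_bounded[where B=1] simp: h_def g01 abs_le_iff)
  also have "(\<integral>x. h x \<partial>\<pi>) = (\<Sum>a\<in>{i,j}. h a * pmf \<pi> a)"
    by (rule integral_measure_pmf_real) (auto simp: h_def split: if_splits)
  also have "\<dots> = (1 - g i) * pmf \<pi> i + (1 - g j) * pmf \<pi> j"
    using assms by (simp add: h_def)
  finally have A: "(\<integral>x. g x \<partial>\<pi>) \<le> 1 - ((1 - g i) * pmf \<pi> i + (1 - g j) * pmf \<pi> j)" .
  define m where "m = min (pmf \<pi> i) (pmf \<pi> j)"
  have m0: "m \<ge> 0" unfolding m_def by (simp add: pmf_nonneg)
  have "1 - g i = measure_pmf.prob (\<mu> i) (- {\<sigma>. f \<sigma> = i})"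
    unfolding g_def by (simp add: measure_pmf.prob_compl[symmetric] Compl_eq_Diff_UNIV)
  moreover have "measure_pmf.prob (\<mu> j) {\<sigma>. f \<sigma> = i} \<le> 1 - g j"
  proof -
    have "measure_pmf.prob (\<mu> j) {\<sigma>. f \<sigma> = i} \<le> measure_pmf.prob (\<mu> j) (- {\<sigma>. f \<sigma> = j})"
      using assms by (intro measure_pmf.finite_measure_mono) auto
    then show ?thesis
      unfolding g_def by (simp add: measure_pmf.prob_compl[symmetric] Compl_eq_Diff_UNIV)
  qed
  ultimately have "ov (\<mu> i) (\<mu> j) \<le> (1 - g i) + (1 - g j)"
    using ov_le[of "\<mu> i" "\<mu> j" "{\<sigma>. f \<sigma> = i}"] by linarith
  then have "m * (1 - tv_dist (\<mu> i) (\<mu> j)) \<le> m * ((1 - g i) + (1 - g j))"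
    by (simp add: tv_ov mult_left_mono m0)
  also have "\<dots> \<le> (1 - g i) * pmf \<pi> i + (1 - g j) * pmf \<pi> j"
  proof -
    have "(1 - g i) * m \<le> (1 - g i) * pmf \<pi> i"
      by (rule mult_left_mono) (auto simp: m_def g01)
    then have "m * (1 - g i) \<le> (1 - g i) * pmf \<pi> i" by (simp add: mult.commute)
    moreover have "(1 - g j) * m \<le> (1 - g j) * pmf \<pi> j"
      by (rule mult_left_mono) (auto simp: m_def g01)
    then have "m * (1 - g j) \<le> (1 - g j) * pmf \<pi> j" by (simp add: mult.commute)
    ultimately show ?thesis by (simp only: distrib_left)
  qed
  finally show ?thesis using A unfolding m_def g_def by linarith
qed


lemma backward_bound:
  fixes \<mu> :: "'a \<Rightarrow> 'b pmf" and f :: "'b \<Rightarrow> 'a"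
  assumes S: "finite S" and fS: "\<And>\<sigma>. f \<sigma> \<in> S"
    and fmax: "\<And>\<sigma> j. j \<in> S \<Longrightarrow> pmf \<pi> j * pmf (\<mu> j) \<sigma> \<le> pmf \<pi> (f \<sigma>) * pmf (\<mu> (f \<sigma>)) \<sigma>"
  shows "measure_pmf.prob \<pi> S - (\<Sum>i\<in>S. \<Sum>j\<in>S-{i}. ov (\<mu> i) (\<mu> j))
     \<le> (\<integral>x. measure_pmf.prob (\<mu> x) {\<sigma>. f \<sigma> = x} \<partial>\<pi>)"
proof -
  define g where "g x = measure_pmf.prob (\<mu> x) {\<sigma>. f \<sigma> = x}" for x
  have g01: "0 \<le> g x" "g x \<le> 1" for x unfolding g_def by auto
  have key: "pmf \<pi> i - (\<Sum>j\<in>S-{i}. ov (\<mu> i) (\<mu> j)) \<le> g i * pmf \<pi> i" if i: "i \<in> S" for i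
  proof -
    have "1 - g i = measure_pmf.prob (\<mu> i) (- {\<sigma>. f \<sigma> = i})"
      unfolding g_def by (simp add: measure_pmf.prob_compl[symmetric] Compl_eq_Diff_UNIV)
    also have "\<dots> \<le> measure_pmf.prob (\<mu> i) (\<Union>j\<in>S-{i}. {\<sigma>. f \<sigma> = j})"
      using fS by (intro measure_pmf.finite_measure_mono) auto
    also have "\<dots> \<le> (\<Sum>j\<in>S-{i}. measure_pmf.prob (\<mu> i) {\<sigma>. f \<sigma> = j})"
      using S by (intro measure_subadditive_finite) (auto simp: measure_pmf.emeasure_eq_measure)
    finally have "pmf \<pi> i * (1 - g i) \<le> pmf \<pi> i * (\<Sum>j\<in>S-{i}. measure_pmf.prob (\<mu> i) {\<sigma>. f \<sigma> = j})"
      by (rule mult_left_mono) (simp add: pmf_nonneg)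
    also have "\<dots> = (\<Sum>j\<in>S-{i}. pmf \<pi> i * measure_pmf.prob (\<mu> i) {\<sigma>. f \<sigma> = j})"
      by (simp add: sum_distrib_left)
    also have "\<dots> \<le> (\<Sum>j\<in>S-{i}. ov (\<mu> i) (\<mu> j))"
    proof (rule sum_mono)
      fix j assume "j \<in> S - {i}"
      show "pmf \<pi> i * measure_pmf.prob (\<mu> i) {\<sigma>. f \<sigma> = j} \<le> ov (\<mu> i) (\<mu> j)"
      proof (rule ov_le_weighted[where b = "pmf \<pi> j"])
        fix \<sigma> assume "\<sigma> \<in> {\<sigma>. f \<sigma> = j}"
        then show "pmf \<pi> i * pmf (\<mu> i) \<sigma> \<le> pmf \<pi> j * pmf (\<mu> j) \<sigma>"
          using fmax[OF i, of \<sigma>] by simp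
      qed (auto simp: pmf_nonneg pmf_le_1)
    qed
    finally show ?thesis by (simp add: algebra_simps)
  qed
  have "(\<integral>x. indicator S x * g x \<partial>\<pi>) \<le> (\<integral>x. g x \<partial>\<pi>)"
    by (intro integral_mono integrable_pmf_bounded[where B=1])
       (auto simp: g01 abs_le_iff indicator_def)
  moreover have "(\<integral>x. indicator S x * g x \<partial>\<pi>) = (\<Sum>a\<in>S. indicator S a * g a * pmf \<pi> a)"
    by (rule integral_measure_pmf_real) (auto simp: S indicator_def split: if_splits)
  moreover have "(\<Sum>a\<in>S. indicator S a * g a * pmf \<pi> a) = (\<Sum>a\<in>S. g a * pmf \<pi> a)"
    by (rule sum.cong) auto
  moreover have "measure_pmf.prob \<pi> S - (\<Sum>i\<in>S. \<Sum>j\<in>S-{i}. ov (\<mu> i) (\<mu> j))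
      = (\<Sum>i\<in>S. pmf \<pi> i - (\<Sum>j\<in>S-{i}. ov (\<mu> i) (\<mu> j)))"
    by (simp add: measure_measure_pmf_finite S sum_subtractf)
  moreover have "\<dots> \<le> (\<Sum>a\<in>S. g a * pmf \<pi> a)"
    by (rule sum_mono) (rule key)
  ultimately show ?thesis unfolding g_def by linarith
qed


lemma liminf_one_iff:
  fixes f :: "nat \<Rightarrow> real"
  assumes "\<And>k. f k \<le> 1"
  shows "liminf (\<lambda>k. ereal (f k)) = 1 \<longleftrightarrow> f \<longlonglongrightarrow> 1"
proof
  assume L: "liminf (\<lambda>k. ereal (f k)) = 1"
  have "limsup (\<lambda>k. ereal (f k)) \<le> 1"
    by (rule Limsup_bounded) (simp add: assms)
  moreover have "liminf (\<lambda>k. ereal (f k)) \<le> limsup (\<lambda>k. ereal (f k))"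
    by (rule Liminf_le_Limsup) simp
  ultimately have "limsup (\<lambda>k. ereal (f k)) = 1" using L by simp
  with L have "(\<lambda>k. ereal (f k)) \<longlonglongrightarrow> 1"
    by (subst tendsto_iff_Liminf_eq_Limsup) simp_all
  then have "(\<lambda>k. ereal (f k)) \<longlonglongrightarrow> ereal 1" by (simp add: one_ereal_def)
  then show "f \<longlonglongrightarrow> 1" by (simp only: lim_ereal)
next
  assume "f \<longlonglongrightarrow> 1"
  then have "(\<lambda>k. ereal (f k)) \<longlonglongrightarrow> ereal 1" by simp
  then show "liminf (\<lambda>k. ereal (f k)) = 1"
    by (simp add: lim_imp_Liminf one_ereal_def)
qed

lemma pmf_large_finite:
  fixes \<pi> :: "'a pmf"
  assumes "e > 0"
  shows "\<exists>S. finite S \<and> S \<subseteq> set_pmf \<pi> \<and> measure_pmf.prob \<pi> S > 1 - e"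
proof -
  have "Infinite_Sum.abs_summable_on (pmf \<pi>) UNIV"
    using abs_summable_equivalent pmf_abs_summable by blast
  then have sm: "pmf \<pi> summable_on UNIV" by (simp add: pmf_nonneg)
  have "infsum (pmf \<pi>) UNIV = 1"
    using infsetsum_infsum[OF pmf_abs_summable[of \<pi> UNIV]] infsetsum_pmf_eq_1[of \<pi> UNIV] by simp
  with sm have "(pmf \<pi> has_sum 1) UNIV" using has_sum_infsum by fastforce
  then have "(sum (pmf \<pi>) \<longlongrightarrow> 1) (finite_subsets_at_top UNIV)" by (simp add: has_sum_def)
  then have "eventually (\<lambda>F. 1 - e < sum (pmf \<pi>) F) (finite_subsets_at_top UNIV)"
    using assms by (intro order_tendstoD(1)) auto
  then obtain X where X: "finite X" "1 - e < sum (pmf \<pi>) X"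
    unfolding eventually_finite_subsets_at_top by blast
  define S where "S = X \<inter> set_pmf \<pi>"
  have "sum (pmf \<pi>) X = sum (pmf \<pi>) S"
    unfolding S_def using X(1) by (intro sum.mono_neutral_right) (auto simp: set_pmf_eq)
  then show ?thesis using X
    by (intro exI[of _ S]) (auto simp: S_def measure_measure_pmf_finite)
qed


theorem mainTheorem6:
  fixes T :: "nat \<Rightarrow> 'v mtree"
    and P :: "real \<Rightarrow> 'a::countable \<Rightarrow> 'a pmf"
    and q :: "'a \<Rightarrow> 'a \<Rightarrow> real"
    and \<pi> :: "'a pmf"
  assumes trees: "\<And>k. k \<ge> 1 \<Longrightarrow> is_mtree (T k)"
    and nleaves: "\<And>k. k \<ge> 1 \<Longrightarrow> card (leaves (T k)) = k"
    and nested: "\<And>k. k \<ge> 2 \<Longrightarrow> restriction_of (T (k - 1)) (T k) (leaves (T (k - 1)))"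
    and bounded_height: "\<exists>H. \<forall>k \<ge> 1. height (T k) \<le> H"
    and trans: "transition_fun P"
    and Qmat: "stable_conservative_Q P q"
    and distinct_rows: "\<And>t i j. t \<ge> 0 \<Longrightarrow> i \<noteq> j \<Longrightarrow> P t i \<noteq> P t j"
  shows "(\<exists>F. consistent_estimators T P \<pi> F) \<longleftrightarrow>
         (\<forall>i j. i \<noteq> j \<and> min (pmf \<pi> i) (pmf \<pi> j) > 0 \<longrightarrow>
            liminf (\<lambda>k. ereal (tv_dist (leaf_law (T k) P i) (leaf_law (T k) P j))) = 1)"
proof -
  define \<mu> where "\<mu> k x = leaf_law (T k) P x" for k x
  define sc where "sc F k = (\<integral>x. measure_pmf.prob (\<mu> k x) {\<sigma>. F k \<sigma> = x} \<partial>\<pi>)"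
    for F :: "nat \<Rightarrow> ('v \<Rightarrow> 'a) \<Rightarrow> 'a" and k
  have succ: "measure_pmf.prob (root_leaf_law (T k) P \<pi>) {(i, \<sigma>). F k \<sigma> = i} = sc F k" for F k
    by (simp add: success_formula \<mu>_def sc_def)
  have sc_le: "sc F k \<le> 1" for F k
    using measure_pmf.prob_le_1 succ by metis
  have cons_iff: "consistent_estimators T P \<pi> F \<longleftrightarrow> sc F \<longlonglongrightarrow> 1" for F
    unfolding consistent_estimators_def succ by (rule liminf_one_iff) (rule sc_le)
  have tv_le: "tv_dist (\<mu> k i) (\<mu> k j) \<le> 1" for k i j
    by (simp add: tv_ov ov_nonneg)
  have tv_iff: "liminf (\<lambda>k. ereal (tv_dist (leaf_law (T k) P i) (leaf_law (T k) P j))) = 1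
      \<longleftrightarrow> (\<lambda>k. tv_dist (\<mu> k i) (\<mu> k j)) \<longlonglongrightarrow> 1" for i j
    unfolding \<mu>_def by (rule liminf_one_iff) (rule tv_le[unfolded \<mu>_def])
  show ?thesis
  proof
    assume "\<exists>F. consistent_estimators T P \<pi> F"
    then obtain F where "consistent_estimators T P \<pi> F" by blast
    then have s1: "sc F \<longlonglongrightarrow> 1" using cons_iff by blast
    show "\<forall>i j. i \<noteq> j \<and> min (pmf \<pi> i) (pmf \<pi> j) > 0 \<longrightarrow>
            liminf (\<lambda>k. ereal (tv_dist (leaf_law (T k) P i) (leaf_law (T k) P j))) = 1"
    proof (intro allI impI)
      fix i j assume ij: "i \<noteq> j \<and> min (pmf \<pi> i) (pmf \<pi> j) > 0"
      define m where "m = min (pmf \<pi> i) (pmf \<pi> j)"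
      have m0: "m > 0" using ij m_def by simp
      have lower: "1 - (1 - sc F k) / m \<le> tv_dist (\<mu> k i) (\<mu> k j)" for k
      proof -
        have "m * (1 - tv_dist (\<mu> k i) (\<mu> k j)) \<le> 1 - sc F k"
          using forward_bound[of i j \<pi> "\<mu> k" "F k"] ij unfolding sc_def m_def by blast
        then have "1 - tv_dist (\<mu> k i) (\<mu> k j) \<le> (1 - sc F k) / m"
          using m0 by (simp add: field_simps)
        then show ?thesis by linarith
      qed
      have "(\<lambda>k. 1 - (1 - sc F k) / m) \<longlonglongrightarrow> 1 - (1 - 1) / m"
        using m0 by (intro tendsto_intros s1) auto
      then have "(\<lambda>k. 1 - (1 - sc F k) / m) \<longlonglongrightarrow> 1" by simp
      then have "(\<lambda>k. tv_dist (\<mu> k i) (\<mu> k j)) \<longlonglongrightarrow> 1"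
        by (rule tendsto_sandwich[rotated 2, OF _ tendsto_const]) (auto simp: lower tv_le)
      then show "liminf (\<lambda>k. ereal (tv_dist (leaf_law (T k) P i) (leaf_law (T k) P j))) = 1"
        using tv_iff by blast
    qed
  next
    assume H: "\<forall>i j. i \<noteq> j \<and> min (pmf \<pi> i) (pmf \<pi> j) > 0 \<longrightarrow>
            liminf (\<lambda>k. ereal (tv_dist (leaf_law (T k) P i) (leaf_law (T k) P j))) = 1"
    have ov0: "(\<lambda>k. ov (\<mu> k i) (\<mu> k j)) \<longlonglongrightarrow> 0"
      if "i \<in> set_pmf \<pi>" "j \<in> set_pmf \<pi>" "i \<noteq> j" for i j
    proof -
      have "pmf \<pi> i > 0" "pmf \<pi> j > 0" using that by (auto simp: pmf_positive)
      then have "(\<lambda>k. tv_dist (\<mu> k i) (\<mu> k j)) \<longlonglongrightarrow> 1"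
        using H that tv_iff by auto
      then have "(\<lambda>k. 1 - tv_dist (\<mu> k i) (\<mu> k j)) \<longlonglongrightarrow> 1 - 1"
        by (intro tendsto_intros)
      then show ?thesis by (simp add: tv_ov)
    qed
    define SS where "SS = {S. finite S \<and> S \<subseteq> set_pmf \<pi>}"
    define b where "b k S = (1 - measure_pmf.prob \<pi> S) + (\<Sum>i\<in>S. \<Sum>j\<in>S-{i}. ov (\<mu> k i) (\<mu> k j))"
      for k S
    define est where "est k S \<sigma> = (SOME i. i \<in> S \<and>
        (\<forall>j\<in>S. pmf \<pi> j * pmf (\<mu> k j) \<sigma> \<le> pmf \<pi> i * pmf (\<mu> k i) \<sigma>))" for k S \<sigma>
    have est_ok: "1 - b k S \<le> (\<integral>x. measure_pmf.prob (\<mu> k x) {\<sigma>. est k S \<sigma> = x} \<partial>\<pi>)"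
      if S: "S \<in> SS" for k S
    proof (cases "S = {}")
      case True
      then show ?thesis by (simp add: b_def integral_nonneg_AE)
    next
      case False
      have fin: "finite S" using S SS_def by simp
      have ex: "\<exists>i. i \<in> S \<and> (\<forall>j\<in>S. pmf \<pi> j * pmf (\<mu> k j) \<sigma> \<le> pmf \<pi> i * pmf (\<mu> k i) \<sigma>)" for \<sigma>
      proof -
        let ?w = "\<lambda>i. pmf \<pi> i * pmf (\<mu> k i) \<sigma>"
        have "Max (?w ` S) \<in> ?w ` S" using fin False by (intro Max_in) auto
        then obtain i where i: "i \<in> S" "?w i = Max (?w ` S)" by auto
        have "\<forall>j\<in>S. ?w j \<le> ?w i" using fin i by simp
        then show ?thesis using i by blast
      qed
      have p: "est k S \<sigma> \<in> S \<and> (\<forall>j\<in>S. pmf \<pi> j * pmf (\<mu> k j) \<sigma> \<le> pmf \<pi> (est k S \<sigma>) * pmf (\<mu> k (est k S \<sigma>)) \<sigma>)" for \<sigma>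
        unfolding est_def by (rule someI_ex[OF ex])
      have "measure_pmf.prob \<pi> S - (\<Sum>i\<in>S. \<Sum>j\<in>S-{i}. ov (\<mu> k i) (\<mu> k j))
         \<le> (\<integral>x. measure_pmf.prob (\<mu> k x) {\<sigma>. est k S \<sigma> = x} \<partial>\<pi>)"
        by (rule backward_bound[OF fin]) (use p in auto)
      then show ?thesis by (simp add: b_def)
    qed
    have bnn: "0 \<le> b k S" for k S
      unfolding b_def by (intro add_nonneg_nonneg sum_nonneg ov_nonneg) (simp add: measure_pmf.prob_le_1)
    define I where "I k = Inf (b k ` SS)" for k
    have SSne: "{} \<in> SS" by (simp add: SS_def)
    have bdd: "bdd_below (b k ` SS)" for k using bnn by (auto simp: bdd_below_def)
    have Ile: "I k \<le> b k S" if "S \<in> SS" for k S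
      unfolding I_def using that bdd by (intro cInf_lower) auto
    have "\<exists>S\<in>SS. b k S < I k + inverse (real (Suc k))" for k
    proof -
      have "Inf (b k ` SS) < I k + inverse (real (Suc k))" by (simp add: I_def)
      then obtain x where "x \<in> b k ` SS" "x < I k + inverse (real (Suc k))"
        using SSne by (metis cInf_lessD empty_iff image_eqI)
      then show ?thesis by auto
    qed
    then obtain Sk where Sk: "\<And>k. Sk k \<in> SS \<and> b k (Sk k) < I k + inverse (real (Suc k))"
      by metis
    define F where "F k = est k (Sk k)" for k
    have bound: "1 - sc F k \<le> b k S + inverse (real (Suc k))" if "S \<in> SS" for k S
      using est_ok[of "Sk k" k] Sk[of k] Ile[OF that, of k] unfolding sc_def F_def by fastforce
    have "sc F \<longlonglongrightarrow> 1"
    proof (rule order_tendstoI)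
      fix a :: real assume "a > 1"
      then show "eventually (\<lambda>k. sc F k < a) sequentially"
        by (intro always_eventually allI) (meson sc_le le_less_trans)
    next
      fix a :: real assume a: "a < 1"
      define e where "e = 1 - a"
      have e: "e > 0" using a e_def by simp
      obtain S where S: "finite S" "S \<subseteq> set_pmf \<pi>" "measure_pmf.prob \<pi> S > 1 - e / 3"
        using pmf_large_finite[of "e / 3" \<pi>] e by auto
      have SinSS: "S \<in> SS" using S SS_def by simp
      have "(\<lambda>k. \<Sum>i\<in>S. \<Sum>j\<in>S-{i}. ov (\<mu> k i) (\<mu> k j)) \<longlonglongrightarrow> (\<Sum>i\<in>S. \<Sum>j\<in>S-{i}. (0::real))"
        using S(2) by (intro tendsto_sum ov0) auto
      then have "eventually (\<lambda>k. (\<Sum>i\<in>S. \<Sum>j\<in>S-{i}. ov (\<mu> k i) (\<mu> k j)) < e / 3) sequentially"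
        using e by (intro order_tendstoD(2)) auto
      moreover have "eventually (\<lambda>k. inverse (real (Suc k)) < e / 3) sequentially"
        using e order_tendstoD(2)[OF LIMSEQ_inverse_real_of_nat, of "e / 3"] by simp
      ultimately show "eventually (\<lambda>k. a < sc F k) sequentially"
      proof eventually_elim
        case (elim k)
        have "1 - sc F k \<le> b k S + inverse (real (Suc k))" by (rule bound[OF SinSS])
        then have "1 - sc F k \<le> 1 - measure_pmf.prob \<pi> S + (\<Sum>i\<in>S. \<Sum>j\<in>S-{i}. ov (\<mu> k i) (\<mu> k j)) + inverse (real (Suc k))"
          unfolding b_def by simp
        moreover have "a = 1 - e" using e_def by simp
        ultimately show ?case using elim S(3) by linarith
      qed
    qed
    then show "\<exists>F. consistent_estimators T P \<pi> F" using cons_iff by blast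
  qed
qed

end
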